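(* If there exists a T2R semigroup, then there exists a T2R semigroup $S=S_0\cup S_1$ which contains an element $b\in S_0$ with $|J_b|=2$ and $I(b)=\{0\}$.
   Context: A semigroup $S$ is a $\Delta$-semigroup if the lattice of all congruences of $S$ is a chain with respect to inclusion. A semigroup $N$ with zero $0$ is nil if every element has some power equal to $0$; non-trivial means having more than one element. A T2R semigroup is a $\Delta$-semigroup $S$ which is the disjoint union of a non-trivial nil ideal $S_0$ (with zero $0$, which is then the zero of $S$) and a subsemigroup $S_1$ which is a two-element right zero semigroup (i.e. $S_1=\{u,v\}$ with $xy=y$ for $x,y\in S_1$). $S^1$ denotes $S$ with an identity $1$ adjoined. For $a\in S$: $J(a)=S^1aS^1$, $J_a=\{s\in S:J(s)=J(a)\}$, $I(a)=J(a)\setminus J_a$. *)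

theory Defs
  imports Main
begin

definition semigroup_on :: "'a set \<Rightarrow> ('a \<Rightarrow> 'a \<Rightarrow> 'a) \<Rightarrow> bool" where
  "semigroup_on S f \<longleftrightarrow> (\<forall>x\<in>S. \<forall>y\<in>S. f x y \<in> S)
     \<and> (\<forall>x\<in>S. \<forall>y\<in>S. \<forall>z\<in>S. f (f x y) z = f x (f y z))"

definition congruence_on :: "'a set \<Rightarrow> ('a \<Rightarrow> 'a \<Rightarrow> 'a) \<Rightarrow> 'a rel \<Rightarrow> bool" where
  "congruence_on S f R \<longleftrightarrow> equiv S R
     \<and> (\<forall>a\<in>S. \<forall>b\<in>S. \<forall>c\<in>S. (a, b) \<in> R \<longrightarrow> (f c a, f c b) \<in> R \<and> (f a c, f b c) \<in> R)"

definition delta_semigroup :: "'a set \<Rightarrow> ('a \<Rightarrow> 'a \<Rightarrow> 'a) \<Rightarrow> bool" where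
  "delta_semigroup S f \<longleftrightarrow> semigroup_on S f
     \<and> (\<forall>R1 R2. congruence_on S f R1 \<longrightarrow> congruence_on S f R2 \<longrightarrow> R1 \<subseteq> R2 \<or> R2 \<subseteq> R1)"

(* spow f x n = x^(n+1) *)
fun spow :: "('a \<Rightarrow> 'a \<Rightarrow> 'a) \<Rightarrow> 'a \<Rightarrow> nat \<Rightarrow> 'a" where
  "spow f x 0 = x"
| "spow f x (Suc n) = f x (spow f x n)"

definition nil_semigroup_with_zero :: "'a set \<Rightarrow> ('a \<Rightarrow> 'a \<Rightarrow> 'a) \<Rightarrow> 'a \<Rightarrow> bool" where
  "nil_semigroup_with_zero N f z \<longleftrightarrow> semigroup_on N f \<and> z \<in> N
     \<and> (\<forall>x\<in>N. f z x = z \<and> f x z = z)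
     \<and> (\<forall>x\<in>N. \<exists>n. spow f x n = z)"

definition ideal_of :: "'a set \<Rightarrow> ('a \<Rightarrow> 'a \<Rightarrow> 'a) \<Rightarrow> 'a set \<Rightarrow> bool" where
  "ideal_of S f I \<longleftrightarrow> I \<subseteq> S \<and> I \<noteq> {} \<and> (\<forall>s\<in>S. \<forall>x\<in>I. f s x \<in> I \<and> f x s \<in> I)"

definition T2R :: "'a set \<Rightarrow> ('a \<Rightarrow> 'a \<Rightarrow> 'a) \<Rightarrow> 'a set \<Rightarrow> 'a set \<Rightarrow> 'a \<Rightarrow> bool" where
  "T2R S f S0 S1 z \<longleftrightarrow> delta_semigroup S f
     \<and> S = S0 \<union> S1 \<and> S0 \<inter> S1 = {}
     \<and> ideal_of S f S0 \<and> nil_semigroup_with_zero S0 f z \<and> card S0 \<noteq> 1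
     \<and> (\<exists>u v. u \<noteq> v \<and> S1 = {u, v} \<and> (\<forall>x\<in>S1. \<forall>y\<in>S1. f x y = y))"

(* J(a) = S^1 a S^1 *)
definition Jideal :: "'a set \<Rightarrow> ('a \<Rightarrow> 'a \<Rightarrow> 'a) \<Rightarrow> 'a \<Rightarrow> 'a set" where
  "Jideal S f a = {a} \<union> {f s a | s. s \<in> S} \<union> {f a t | t. t \<in> S} \<union> {f (f s a) t | s t. s \<in> S \<and> t \<in> S}"

definition Jclass :: "'a set \<Rightarrow> ('a \<Rightarrow> 'a \<Rightarrow> 'a) \<Rightarrow> 'a \<Rightarrow> 'a set" where
  "Jclass S f a = {s \<in> S. Jideal S f s = Jideal S f a}"

definition Iideal :: "'a set \<Rightarrow> ('a \<Rightarrow> 'a \<Rightarrow> 'a) \<Rightarrow> 'a \<Rightarrow> 'a set" where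
  "Iideal S f a = Jideal S f a - Jclass S f a"

end

theory Submission
  imports Defs
begin


definition lm :: "('a\<Rightarrow>'a\<Rightarrow>'a) \<Rightarrow> 'a option \<Rightarrow> 'a \<Rightarrow> 'a" where
  "lm f s x = (case s of None \<Rightarrow> x | Some a \<Rightarrow> f a x)"
definition rm :: "('a\<Rightarrow>'a\<Rightarrow>'a) \<Rightarrow> 'a \<Rightarrow> 'a option \<Rightarrow> 'a" where
  "rm f x t = (case t of None \<Rightarrow> x | Some a \<Rightarrow> f x a)"
definition opt :: "'a set \<Rightarrow> 'a option set" where
  "opt S = insert None (Some ` S)"
definition oprod :: "('a\<Rightarrow>'a\<Rightarrow>'a) \<Rightarrow> 'a option \<Rightarrow> 'a option \<Rightarrow> 'a option" where
  "oprod f s t = (case s of None \<Rightarrow> t | Some a \<Rightarrow> (case t of None \<Rightarrow> Some a | Some b \<Rightarrow> Some (f a b)))"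

lemma Jideal_alt: "Jideal S f a = {rm f (lm f s a) t |s t. s \<in> opt S \<and> t \<in> opt S}"
  unfolding Jideal_def opt_def lm_def rm_def
  apply (rule set_eqI)
  apply (rule iffI)
   apply (elim UnE; clarsimp)
      apply (rule exI[of _ None], simp, rule exI[of _ None], simp)
     apply (metis (no_types, lifting) imageI option.simps(4,5))
    apply (metis (no_types, lifting) imageI option.simps(4,5))
   apply (metis (no_types, lifting) imageI option.simps(5))
  apply (auto split: option.splits)
  done

locale sgp =
  fixes S :: "'a set" and f :: "'a \<Rightarrow> 'a \<Rightarrow> 'a"
  assumes sg: "semigroup_on S f"
begin

lemma cl[simp,intro]: "x \<in> S \<Longrightarrow> y \<in> S \<Longrightarrow> f x y \<in> S"
  using sg unfolding semigroup_on_def by blast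
lemma assoc: "x \<in> S \<Longrightarrow> y \<in> S \<Longrightarrow> w \<in> S \<Longrightarrow> f (f x y) w = f x (f y w)"
  using sg unfolding semigroup_on_def by blast

lemma opt_cases: "s \<in> opt S \<Longrightarrow> s = None \<or> (\<exists>a\<in>S. s = Some a)"
  unfolding opt_def by auto

lemma lm_S[simp,intro]: "s \<in> opt S \<Longrightarrow> x \<in> S \<Longrightarrow> lm f s x \<in> S"
  unfolding opt_def lm_def by auto
lemma rm_S[simp,intro]: "t \<in> opt S \<Longrightarrow> x \<in> S \<Longrightarrow> rm f x t \<in> S"
  unfolding opt_def rm_def by auto
lemma oprod_S[simp,intro]: "s \<in> opt S \<Longrightarrow> t \<in> opt S \<Longrightarrow> oprod f s t \<in> opt S"
  unfolding opt_def oprod_def by auto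
lemma lm_lm: "s \<in> opt S \<Longrightarrow> t \<in> opt S \<Longrightarrow> x \<in> S \<Longrightarrow> lm f s (lm f t x) = lm f (oprod f s t) x"
  unfolding opt_def oprod_def lm_def by (auto simp: assoc)
lemma rm_rm: "s \<in> opt S \<Longrightarrow> t \<in> opt S \<Longrightarrow> x \<in> S \<Longrightarrow> rm f (rm f x s) t = rm f x (oprod f s t)"
  unfolding opt_def oprod_def rm_def by (auto simp: assoc)
lemma lm_rm: "s \<in> opt S \<Longrightarrow> t \<in> opt S \<Longrightarrow> x \<in> S \<Longrightarrow> lm f s (rm f x t) = rm f (lm f s x) t"
  unfolding opt_def rm_def lm_def by (auto simp: assoc)

lemma J_self: "a \<in> Jideal S f a"
  unfolding Jideal_def by auto
lemma J_sub: "a \<in> S \<Longrightarrow> Jideal S f a \<subseteq> S"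
  unfolding Jideal_alt by auto

lemma J_trans: assumes "a \<in> S" "x \<in> Jideal S f a" shows "Jideal S f x \<subseteq> Jideal S f a"
proof
  fix y assume "y \<in> Jideal S f x"
  then obtain s t where st: "s \<in> opt S" "t \<in> opt S" "y = rm f (lm f s x) t" unfolding Jideal_alt by auto
  from assms obtain s' t' where st': "s' \<in> opt S" "t' \<in> opt S" "x = rm f (lm f s' a) t'" unfolding Jideal_alt by auto
  have "y = rm f (lm f (oprod f s s') a) (oprod f t' t)"
    using st st' assms by (simp add: lm_rm[symmetric] lm_lm rm_rm)
  thus "y \<in> Jideal S f a" unfolding Jideal_alt using st st' by blast
qed

lemma J_left: "a \<in> S \<Longrightarrow> s \<in> S \<Longrightarrow> f s a \<in> Jideal S f a"
  unfolding Jideal_def by auto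
lemma J_right: "a \<in> S \<Longrightarrow> s \<in> S \<Longrightarrow> f a s \<in> Jideal S f a"
  unfolding Jideal_def by auto

lemma spow_S: "x \<in> S \<Longrightarrow> spow f x n \<in> S"
  by (induction n) auto
lemma spow_comm: "x \<in> S \<Longrightarrow> f (spow f x n) x = f x (spow f x n)"
  by (induction n) (auto simp: assoc spow_S)

end



locale t2rs = sgp +
  fixes S0 u v z
  assumes S_eq: "S = S0 \<union> {u,v}" and uS0: "u \<notin> S0" and vS0: "v \<notin> S0" and uv: "u \<noteq> v"
  and ideal: "ideal_of S f S0" and nil: "nil_semigroup_with_zero S0 f z"
  and uu: "f u u = u" and uvv: "f u v = v" and vu: "f v u = u" and vv: "f v v = v"
begin

lemma S0S: "S0 \<subseteq> S" and uS[simp]: "u \<in> S" and vS[simp]: "v \<in> S"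
  using S_eq by auto
lemma S0S'[intro]: "x \<in> S0 \<Longrightarrow> x \<in> S" using S0S by auto
lemma idl[intro]: "s \<in> S \<Longrightarrow> x \<in> S0 \<Longrightarrow> f s x \<in> S0"
  using ideal unfolding ideal_of_def by blast
lemma idr[intro]: "s \<in> S \<Longrightarrow> x \<in> S0 \<Longrightarrow> f x s \<in> S0"
  using ideal unfolding ideal_of_def by blast
lemma zS0[simp]: "z \<in> S0" using nil unfolding nil_semigroup_with_zero_def by blast
lemma zS[simp]: "z \<in> S" using zS0 S0S by blast
lemma z0: "x \<in> S0 \<Longrightarrow> f z x = z \<and> f x z = z"
  using nil unfolding nil_semigroup_with_zero_def by blast
lemma nilpow: "x \<in> S0 \<Longrightarrow> \<exists>n. spow f x n = z"
  using nil unfolding nil_semigroup_with_zero_def by blast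

lemma zl: assumes "x \<in> S" shows "f z x = z"
proof -
  have "x \<in> S0 \<or> x = u \<or> x = v" using assms S_eq by auto
  moreover { fix w assume w: "w \<in> {u,v}"
    have wz: "f z w \<in> S0" using w by auto
    have wS: "w \<in> S" using w by auto
    have "f z (f z w) = f (f z z) w" using wS by (simp add: assoc)
    also have "\<dots> = f z w" using z0[of z] by simp
    finally have "f z w = z" using z0[OF wz] by simp }
  ultimately show ?thesis using z0 by auto
qed
lemma zr: assumes "x \<in> S" shows "f x z = z"
proof -
  have "x \<in> S0 \<or> x = u \<or> x = v" using assms S_eq by auto
  moreover { fix w assume w: "w \<in> {u,v}"
    have wz: "f w z \<in> S0" using w by auto
    have wS: "w \<in> S" using w by auto
    have "f (f w z) z = f w (f z z)" using wS by (simp add: assoc)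
    also have "\<dots> = f w z" using z0[of z] by simp
    finally have "f w z = z" using z0[OF wz] by simp }
  ultimately show ?thesis using z0 by auto
qed

lemma lm_z: "s \<in> opt S \<Longrightarrow> lm f s z = z"
  unfolding opt_def lm_def using zr by auto
lemma rm_z: "s \<in> opt S \<Longrightarrow> rm f z s = z"
  unfolding opt_def rm_def using zl by auto

lemma nil_left:
  assumes a: "a \<in> S" and s: "s \<in> S0" and t: "t \<in> opt S" and eq: "a = rm f (f s a) t"
  shows "a = z"
proof -
  have sS: "s \<in> S" using s by auto
  have "\<exists>t'\<in>opt S. a = rm f (f (spow f s n) a) t'" for n
  proof (induction n)
    case 0 then show ?case using t eq by auto
  next
    case (Suc n)
    then obtain t' where t': "t' \<in> opt S" "a = rm f (f (spow f s n) a) t'" by auto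
    have spS: "spow f s n \<in> S" using spow_S sS by auto
    have "f (spow f s n) a = lm f (Some (spow f s n)) (rm f (f s a) t)"
      using eq by (simp add: lm_def)
    also have "\<dots> = rm f (f (spow f s n) (f s a)) t"
      using spS t a sS by (subst lm_rm) (auto simp: opt_def lm_def)
    also have "f (spow f s n) (f s a) = f (spow f s (Suc n)) a"
      using spS sS a by (simp add: assoc[symmetric] spow_comm)
    finally have "a = rm f (rm f (f (spow f s (Suc n)) a) t) t'" using t' by simp
    also have "\<dots> = rm f (f (spow f s (Suc n)) a) (oprod f t t')"
      by (rule rm_rm[OF t t'(1)]) (use a sS spow_S[OF sS] in auto)
    finally show ?case using t t' by blast
  qed
  moreover obtain n where "spow f s n = z" using nilpow s by blast
  ultimately obtain t' where "t' \<in> opt S" "a = rm f (f z a) t'" by metis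
  thus ?thesis using zl a rm_z by simp
qed

lemma nil_right:
  assumes a: "a \<in> S" and s: "s \<in> S0" and t: "t \<in> opt S" and eq: "a = lm f t (f a s)"
  shows "a = z"
proof -
  have sS: "s \<in> S" using s by auto
  have "\<exists>t'\<in>opt S. a = lm f t' (f a (spow f s n))" for n
  proof (induction n)
    case 0 then show ?case using t eq by auto
  next
    case (Suc n)
    then obtain t' where t': "t' \<in> opt S" "a = lm f t' (f a (spow f s n))" by auto
    have spS: "spow f s n \<in> S" using spow_S sS by auto
    have "f a (spow f s n) = rm f (lm f t (f a s)) (Some (spow f s n))"
      using eq by (simp add: rm_def)
    also have "\<dots> = lm f t (f (f a s) (spow f s n))"
      using spS t a sS by (subst lm_rm[symmetric]) (auto simp: opt_def rm_def)
    also have "f (f a s) (spow f s n) = f a (spow f s (Suc n))"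
      using spS sS a by (simp add: assoc)
    finally have "a = lm f t' (lm f t (f a (spow f s (Suc n))))" using t' by simp
    also have "\<dots> = lm f (oprod f t' t) (f a (spow f s (Suc n)))"
      by (rule lm_lm[OF t'(1) t]) (use a sS spow_S[OF sS] in auto)
    finally show ?case using t t' by blast
  qed
  moreover obtain n where "spow f s n = z" using nilpow s by blast
  ultimately obtain t' where "t' \<in> opt S" "a = lm f t' (f a z)" by metis
  thus ?thesis using zr a lm_z by simp
qed

definition "U = {None, Some u, Some v}"

lemma opt_split: "s \<in> opt S \<Longrightarrow> s \<in> U \<or> (\<exists>a\<in>S0. s = Some a)"
  unfolding opt_def U_def using S_eq by auto

lemma fix_U:
  assumes a: "a \<in> S" "a \<noteq> z" and s: "s \<in> opt S" and t: "t \<in> opt S"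
    and eq: "a = rm f (lm f s a) t"
  shows "s \<in> U \<and> t \<in> U"
proof -
  have "s \<in> U"
  proof (rule ccontr)
    assume "s \<notin> U"
    then obtain b where b: "b \<in> S0" "s = Some b" using opt_split s by blast
    hence "a = rm f (f b a) t" using eq by (simp add: lm_def)
    thus False using nil_left[OF a(1) b(1) t] a(2) by blast
  qed
  moreover have "t \<in> U"
  proof (rule ccontr)
    assume "t \<notin> U"
    then obtain b where b: "b \<in> S0" "t = Some b" using opt_split t by blast
    hence "a = rm f (lm f s a) (Some b)" using eq by simp
    also have "\<dots> = lm f s (rm f a (Some b))" using s a b by (subst lm_rm) (auto simp: opt_def)
    finally have "a = lm f s (f a b)" by (simp add: rm_def)
    thus False using nil_right[OF a(1) b(1) s] a(2) by blast
  qed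
  ultimately show ?thesis by blast
qed

lemma oprod_U1: "s \<in> opt S \<Longrightarrow> t \<in> opt S \<Longrightarrow> oprod f s t \<in> U \<Longrightarrow> t \<in> U"
  unfolding opt_def U_def oprod_def using S_eq idl uS0 vS0
  by (auto split: option.splits) (metis S0S' UnE empty_iff insertE)+

lemma oprod_U2: "s \<in> opt S \<Longrightarrow> t \<in> opt S \<Longrightarrow> oprod f s t \<in> U \<Longrightarrow> s \<in> U"
  unfolding opt_def U_def oprod_def using S_eq idr uS0 vS0
  by (auto split: option.splits) (metis S0S' UnE empty_iff insertE)+

end


context t2rs begin

lemma rz: "w \<in> {u,v} \<Longrightarrow> y \<in> {u,v} \<Longrightarrow> f y w = w"
  using uu uvv vu vv by auto

lemma Jclass_two:
  assumes p: "p \<in> S0" and pu: "f p u = p" and pv: "f p v \<noteq> p"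
  shows "Jclass S f p = {p, f p v}"
proof -
  define q where "q = f p v"
  have pS: "p \<in> S" using p by auto
  have qS0: "q \<in> S0" unfolding q_def using p by auto
  hence qS: "q \<in> S" by auto
  have qu: "f q u = p" unfolding q_def using pS by (simp add: assoc vu pu)
  have qv: "f q v = q" unfolding q_def using pS by (simp add: assoc vv)
  have pq: "p \<noteq> q" using pv q_def by simp
  have pz: "p \<noteq> z" using pq q_def zl by auto
  have Jq: "Jideal S f q = Jideal S f p"
  proof
    show "Jideal S f q \<subseteq> Jideal S f p" using J_trans[OF pS] J_right[OF pS vS] q_def by simp
    show "Jideal S f p \<subseteq> Jideal S f q" using J_trans[OF qS] J_right[OF qS uS] qu by simp
  qed
  have "x \<in> {p, q}" if x: "x \<in> Jclass S f p" for x
  proof -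
    have xS: "x \<in> S" and Jx: "Jideal S f x = Jideal S f p" using x unfolding Jclass_def by auto
    have "x \<in> Jideal S f p" using Jx J_self by metis
    then obtain s t where st: "s \<in> opt S" "t \<in> opt S" "x = rm f (lm f s p) t"
      unfolding Jideal_alt by auto
    have "p \<in> Jideal S f x" using Jx J_self by metis
    then obtain s' t' where st': "s' \<in> opt S" "t' \<in> opt S" "p = rm f (lm f s' x) t'"
      unfolding Jideal_alt by auto
    have "p = rm f (lm f s' (rm f (lm f s p) t)) t'"
      unfolding st(3)[symmetric] by (rule st'(3))
    also have "\<dots> = rm f (lm f (oprod f s' s) p) (oprod f t t')"
      using st(1,2) st'(1,2) pS by (simp add: lm_rm lm_lm rm_rm)
    finally have "p = rm f (lm f (oprod f s' s) p) (oprod f t t')" .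
    hence U: "oprod f s' s \<in> U" "oprod f t t' \<in> U"
      using fix_U[OF pS pz, of "oprod f s' s" "oprod f t t'"] st(1,2) st'(1,2) by auto
    have sU: "s \<in> U" and s'U: "s' \<in> U" and tU: "t \<in> U" and t'U: "t' \<in> U"
      using oprod_U1[OF st'(1) st(1) U(1)] oprod_U2[OF st'(1) st(1) U(1)]
        oprod_U1[OF st(2) st'(2) U(2)] oprod_U2[OF st(2) st'(2) U(2)] by auto
    have rmpq: "y \<in> {p,q} \<Longrightarrow> r \<in> U \<Longrightarrow> rm f y r \<in> {p,q}" for y r
      unfolding U_def rm_def using pu q_def qu qv by auto
    define r where "r = rm f p t"
    have r: "r \<in> {p,q}" unfolding r_def using rmpq tU by simp
    have rS: "r \<in> S" using r pS qS by auto
    have xr: "x = lm f s r" unfolding r_def using st pS by (simp add: lm_rm)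
    show ?thesis
    proof (cases s)
      case None then show ?thesis using xr r by (simp add: lm_def)
    next
      case (Some w)
      hence w: "w \<in> {u,v}" using sU U_def by auto
      have wS: "w \<in> S" using w by auto
      have xw: "x = f w r" using xr Some by (simp add: lm_def)
      have yw: "f y (f w r) = f w r" if y: "y \<in> {u,v}" for y
      proof -
        have "f y (f w r) = f (f y w) r" using assoc[of y w r] y wS rS by auto
        thus ?thesis using rz[OF w y] by simp
      qed
      have "lm f s' (f w r) = f w r" using s'U yw
        unfolding U_def lm_def by auto
      hence "p = rm f (f w r) t'" using st' xw by simp
      also have "\<dots> = f w (rm f r t')" using t'U assoc[OF wS rS uS] assoc[OF wS rS vS]
        unfolding U_def rm_def by auto
      finally have pw: "p = f w (rm f r t')" .
      define r' where "r' = rm f r t'"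
      have r'S: "r' \<in> S" unfolding r'_def using rS t'U unfolding U_def rm_def by auto
      have "f w p = f (f w w) r'" using pw r'_def r'S wS assoc[OF wS wS r'S] by simp
      hence wp: "f w p = p" using rz[OF w w] pw r'_def by simp
      have wq: "f w q = q" unfolding q_def using assoc[OF wS pS vS] wp by simp
      show ?thesis using xw r wp wq by auto
    qed
  qed
  moreover have "p \<in> Jclass S f p" "q \<in> Jclass S f p" unfolding Jclass_def using pS qS Jq by auto
  ultimately show ?thesis using q_def by blast
qed

end


lemma congI:
  assumes "R \<subseteq> S \<times> S" "\<And>x. x \<in> S \<Longrightarrow> (x,x) \<in> R" "sym R" "trans R"
    "\<And>a b c. (a,b) \<in> R \<Longrightarrow> c \<in> S \<Longrightarrow> (f c a, f c b) \<in> R \<and> (f a c, f b c) \<in> R"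
  shows "congruence_on S f R"
  unfolding congruence_on_def equiv_def refl_on_def using assms by blast

lemma congD: "congruence_on S f R \<Longrightarrow> (a,b) \<in> R \<Longrightarrow> c \<in> S \<Longrightarrow> (f c a, f c b) \<in> R \<and> (f a c, f b c) \<in> R"
  unfolding congruence_on_def equiv_def refl_on_def by blast

lemma congS: "congruence_on S f R \<Longrightarrow> (a,b) \<in> R \<Longrightarrow> a \<in> S \<and> b \<in> S"
  unfolding congruence_on_def equiv_def refl_on_def by blast

context t2rs begin

lemma Scases: "c \<in> S \<Longrightarrow> c \<in> S0 \<or> c = u \<or> c = v" using S_eq by auto

lemma rees_cong: "congruence_on S f {(x,y). x \<in> S \<and> y \<in> S \<and> (x = y \<or> (x \<in> S0 \<and> y \<in> S0))}"
  by (rule congI) (auto simp: sym_def trans_def)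

lemma exists_x0:
  assumes D: "delta_semigroup S f" and C: "card S0 \<noteq> 1"
  shows "\<exists>x\<in>S0. f x u \<noteq> f x v"
proof (rule ccontr)
  assume "\<not> ?thesis"
  hence H: "\<And>x. x \<in> S0 \<Longrightarrow> f x u = f x v" by auto
  have chain: "\<And>R1 R2. congruence_on S f R1 \<Longrightarrow> congruence_on S f R2 \<Longrightarrow> R1 \<subseteq> R2 \<or> R2 \<subseteq> R1"
    using D unfolding delta_semigroup_def by blast
  define \<rho> where "\<rho> = {(x,y). x \<in> S \<and> y \<in> S \<and> (x = y \<or> (x \<in> S0 \<and> y \<in> S0))}"
  have r: "congruence_on S f \<rho>" unfolding \<rho>_def by (rule rees_cong)
  have uvr: "(u,v) \<notin> \<rho>" unfolding \<rho>_def using uv uS0 by auto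
  obtain a where a: "a \<in> S0" "a \<noteq> z"
  proof -
    have "S0 \<noteq> {z}" using C by auto
    thus ?thesis using that zS0 by blast
  qed
  have vfix: "f v x = x" if "x \<in> S0" "f u x = x" for x
  proof -
    have "f v x = f v (f u x)" using that by simp
    also have "\<dots> = f (f v u) x" using assoc[of v u x] S0S'[OF that(1)] by simp
    finally show ?thesis using vu that by simp
  qed
  define R where "R = {(x,y). x \<in> S \<and> y \<in> S \<and> (x = y \<or> (x = u \<and> y = v) \<or> (x = v \<and> y = u) \<or>
     (x \<in> S0 \<and> y \<in> S0 \<and> f u x = x \<and> f u y = y \<and> (\<forall>s\<in>S0. f s x = f s y)))}"
  have R: "congruence_on S f R"
  proof (rule congI)
    show "R \<subseteq> S \<times> S" unfolding R_def by auto
    show "\<And>x. x \<in> S \<Longrightarrow> (x,x) \<in> R" unfolding R_def by auto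
    show "sym R" unfolding R_def sym_def by auto
    show "trans R" unfolding R_def trans_def using uS0 vS0 uv by (auto; metis)
    fix a b c assume ab: "(a,b) \<in> R" and c: "c \<in> S"
    have Rc: "(x, y) \<in> R" if "x \<in> S0" "y \<in> S0" "f u x = x" "f u y = y" "\<forall>s\<in>S0. f s x = f s y" for x y
      unfolding R_def using that by auto
    have cuv: "(f c u, f c v) \<in> R \<and> (f u c, f v c) \<in> R"
    proof -
      have l: "(f c u, f c v) \<in> R"
        using Scases[OF c] H[of c] c uu uvv vu vv unfolding R_def by auto
      have r: "(f u c, f v c) \<in> R"
      proof (cases "c \<in> S0")
        case True
        show ?thesis
        proof (rule Rc)
          show "f u c \<in> S0" "f v c \<in> S0" using True by auto
          show "f u (f u c) = f u c" using assoc[of u u c] S0S'[OF True] uu by simp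
          show "f u (f v c) = f v c" using assoc[of u v c] S0S'[OF True] uvv by simp
          show "\<forall>s\<in>S0. f s (f u c) = f s (f v c)"
          proof
            fix s assume s: "s \<in> S0"
            show "f s (f u c) = f s (f v c)" using assoc[of s u c] assoc[of s v c] S0S'[OF True] S0S'[OF s] H[OF s] by simp
          qed
        qed
      next
        case False
        hence "c = u \<or> c = v" using Scases[OF c] by auto
        then show ?thesis using uu uvv vu vv unfolding R_def by auto
      qed
      show ?thesis using l r by auto
    qed
    have blk: "(f c x, f c y) \<in> R \<and> (f x c, f y c) \<in> R"
      if xy: "x \<in> S0" "y \<in> S0" "f u x = x" "f u y = y" "\<forall>s\<in>S0. f s x = f s y" for x y
    proof -
      have xS: "x \<in> S" "y \<in> S" using xy by auto
      have l: "(f c x, f c y) \<in> R"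
      proof (cases "c \<in> S0")
        case True then show ?thesis using xy c unfolding R_def by auto
      next
        case False
        hence "c = u \<or> c = v" using Scases[OF c] by auto
        moreover have "(x,y) \<in> R" using Rc xy by auto
        ultimately show ?thesis using xy vfix by auto
      qed
      have r: "(f x c, f y c) \<in> R"
      proof (rule Rc)
        show "f x c \<in> S0" "f y c \<in> S0" using xy c by auto
        show "f u (f x c) = f x c" using xy(3) c xS assoc[of u x c] by simp
        show "f u (f y c) = f y c" using xy(4) c xS assoc[of u y c] by simp
        show "\<forall>s\<in>S0. f s (f x c) = f s (f y c)"
        proof
          fix s assume s: "s \<in> S0"
          show "f s (f x c) = f s (f y c)" using assoc[of s x c] assoc[of s y c] xS c S0S'[OF s] xy(5) s by simp
        qed
      qed
      show ?thesis using l r by auto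
    qed
    have "a = b \<or> (a = u \<and> b = v) \<or> (a = v \<and> b = u) \<or>
      (a \<in> S0 \<and> b \<in> S0 \<and> f u a = a \<and> f u b = b \<and> (\<forall>s\<in>S0. f s a = f s b))"
      using ab unfolding R_def by auto
    moreover have "a \<in> S" "b \<in> S" using ab unfolding R_def by auto
    moreover have refl: "(w,w) \<in> R" if "w \<in> S" for w unfolding R_def using that by auto
    moreover have symm: "(x,y) \<in> R \<Longrightarrow> (y,x) \<in> R" for x y unfolding R_def by auto
    ultimately show "(f c a, f c b) \<in> R \<and> (f a c, f b c) \<in> R"
    proof (elim disjE)
      assume "a = b" thus ?thesis using refl c \<open>a \<in> S\<close> by auto
    next
      assume "a = u \<and> b = v" thus ?thesis using cuv by auto
    next
      assume "a = v \<and> b = u" thus ?thesis using cuv symm by auto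
    next
      assume "a \<in> S0 \<and> b \<in> S0 \<and> f u a = a \<and> f u b = b \<and> (\<forall>s\<in>S0. f s a = f s b)"
      thus ?thesis using blk by blast
    qed
  qed
  have "(u,v) \<in> R" unfolding R_def by auto
  hence "\<rho> \<subseteq> R" using chain[OF r R] uvr by auto
  hence allfix: "f u x = x" if "x \<in> S0" for x
  proof (cases "x = z")
    case True then show ?thesis using zr by auto
  next
    case False
    have "(x, z) \<in> \<rho>" unfolding \<rho>_def using that by auto
    hence "(x, z) \<in> R" using \<open>\<rho> \<subseteq> R\<close> by auto
    thus ?thesis unfolding R_def using False that uS0 vS0 by auto
  qed
  define lam where "lam = {(x,y). x \<in> S \<and> y \<in> S \<and> (x = y \<or> (x = u \<and> y = v) \<or> (x = v \<and> y = u))}"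
  have L: "congruence_on S f lam"
  proof (rule congI)
    show "lam \<subseteq> S \<times> S" unfolding lam_def by auto
    show "\<And>x. x \<in> S \<Longrightarrow> (x,x) \<in> lam" unfolding lam_def by auto
    show "sym lam" unfolding lam_def sym_def by auto
    show "trans lam" unfolding lam_def trans_def by auto
    fix a b c assume ab: "(a,b) \<in> lam" and c: "c \<in> S"
    have "(f c u, f c v) \<in> lam \<and> (f u c, f v c) \<in> lam"
    proof (cases "c \<in> S0")
      case True
      have "f u c = c" using allfix True by auto
      moreover have "f v c = c" using vfix True allfix by auto
      ultimately show ?thesis using H[OF True] c unfolding lam_def by auto
    next
      case False
      hence "c = u \<or> c = v" using Scases[OF c] by auto
      then show ?thesis using uu uvv vu vv unfolding lam_def by auto
    qed
    moreover have "a = b \<or> (a = u \<and> b = v) \<or> (a = v \<and> b = u)" "a \<in> S" using ab unfolding lam_def by auto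
    moreover have refl: "(w,w) \<in> lam" if "w \<in> S" for w unfolding lam_def using that by auto
    moreover have symm: "(x,y) \<in> lam \<Longrightarrow> (y,x) \<in> lam" for x y unfolding lam_def by auto
    ultimately show "(f c a, f c b) \<in> lam \<and> (f a c, f b c) \<in> lam" using c by auto
  qed
  have "(u,v) \<in> lam" unfolding lam_def by auto
  moreover have "(a,z) \<in> \<rho>" "(a,z) \<notin> lam" using a uS0 vS0 unfolding \<rho>_def lam_def by auto
  ultimately show False using chain[OF r L] uvr by auto
qed

end


lemma max_cong:
  assumes sg: "semigroup_on S f" and D: "delta_semigroup S f" and pq: "p \<noteq> q"
  defines "mu \<equiv> \<Union>{R. congruence_on S f R \<and> (p,q) \<notin> R}"
  shows "congruence_on S f mu" "(p,q) \<notin> mu"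
    "\<And>R. congruence_on S f R \<Longrightarrow> (p,q) \<notin> R \<Longrightarrow> R \<subseteq> mu"
proof -
  have chain: "\<And>R1 R2. congruence_on S f R1 \<Longrightarrow> congruence_on S f R2 \<Longrightarrow> R1 \<subseteq> R2 \<or> R2 \<subseteq> R1"
    using D unfolding delta_semigroup_def by blast
  have idc: "congruence_on S f (Id_on S)"
    by (rule congI) (use sg in \<open>auto simp: semigroup_on_def sym_def trans_def\<close>)
  have idpq: "(p,q) \<notin> Id_on S" using pq by auto
  show "(p,q) \<notin> mu" unfolding mu_def by auto
  show "\<And>R. congruence_on S f R \<Longrightarrow> (p,q) \<notin> R \<Longrightarrow> R \<subseteq> mu" unfolding mu_def by auto
  show "congruence_on S f mu"
  proof (rule congI)
    show "mu \<subseteq> S \<times> S"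
    proof
      fix xy assume "xy \<in> mu"
      then obtain R where R: "congruence_on S f R" "xy \<in> R" unfolding mu_def by blast
      obtain x y where xy: "xy = (x,y)" by (cases xy)
      show "xy \<in> S \<times> S" using congS[OF R(1)] R(2) xy by blast
    qed
    show "\<And>x. x \<in> S \<Longrightarrow> (x,x) \<in> mu" unfolding mu_def using idc idpq by blast
    show "sym mu" unfolding sym_def
    proof (intro allI impI)
      fix x y assume "(x,y) \<in> mu"
      then obtain R where R: "congruence_on S f R" "(p,q) \<notin> R" "(x,y) \<in> R" unfolding mu_def by blast
      have "(y,x) \<in> R" using R(1,3) unfolding congruence_on_def equiv_def sym_def by blast
      thus "(y,x) \<in> mu" unfolding mu_def using R by blast
    qed
    show "trans mu" unfolding trans_def
    proof (intro allI impI)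
      fix x y w assume "(x,y) \<in> mu" "(y,w) \<in> mu"
      then obtain R1 R2 where R: "congruence_on S f R1" "(p,q) \<notin> R1" "(x,y) \<in> R1"
        "congruence_on S f R2" "(p,q) \<notin> R2" "(y,w) \<in> R2" unfolding mu_def by blast
      have tr: "trans R1" "trans R2" using R(1,4) unfolding congruence_on_def equiv_def by blast+
      have "R1 \<subseteq> R2 \<or> R2 \<subseteq> R1" using chain R(1,4) by blast
      hence "(x,w) \<in> R1 \<or> (x,w) \<in> R2"
      proof
        assume "R1 \<subseteq> R2" thus ?thesis using tr(2) R(3,6) unfolding trans_def by blast
      next
        assume "R2 \<subseteq> R1" thus ?thesis using tr(1) R(3,6) unfolding trans_def by blast
      qed
      thus "(x,w) \<in> mu" unfolding mu_def using R by blast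
    qed
    fix a b c assume "(a,b) \<in> mu" "c \<in> S"
    then obtain R where R: "congruence_on S f R" "(p,q) \<notin> R" "(a,b) \<in> R" unfolding mu_def by blast
    have "(f c a, f c b) \<in> R \<and> (f a c, f b c) \<in> R" using congD[OF R(1) R(3) \<open>c \<in> S\<close>] .
    thus "(f c a, f c b) \<in> mu \<and> (f a c, f b c) \<in> mu" unfolding mu_def using R(1,2) by blast
  qed
qed

locale qt = t2rs +
  fixes mu x0
  assumes mu: "congruence_on S f mu" and x0: "x0 \<in> S0" and sep: "(f x0 u, f x0 v) \<notin> mu"
  and max: "\<And>R. congruence_on S f R \<Longrightarrow> (f x0 u, f x0 v) \<notin> R \<Longrightarrow> R \<subseteq> mu"
begin

definition rep where "rep x = (SOME y. (x,y) \<in> mu)"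
definition g where "g x y = rep (f x y)"

lemma muS: "(x,y) \<in> mu \<Longrightarrow> x \<in> S \<and> y \<in> S" using congS[OF mu] by blast
lemma mu_refl: "x \<in> S \<Longrightarrow> (x,x) \<in> mu" using mu unfolding congruence_on_def equiv_def refl_on_def by blast
lemma mu_sym: "(x,y) \<in> mu \<Longrightarrow> (y,x) \<in> mu" using mu unfolding congruence_on_def equiv_def sym_def by blast
lemma mu_trans: "(x,y) \<in> mu \<Longrightarrow> (y,w) \<in> mu \<Longrightarrow> (x,w) \<in> mu" using mu unfolding congruence_on_def equiv_def trans_def by blast
lemma mu_l: "(x,y) \<in> mu \<Longrightarrow> c \<in> S \<Longrightarrow> (f c x, f c y) \<in> mu" using congD[OF mu] by blast
lemma mu_r: "(x,y) \<in> mu \<Longrightarrow> c \<in> S \<Longrightarrow> (f x c, f y c) \<in> mu" using congD[OF mu] by blast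
lemma mu_2: assumes "(x,y) \<in> mu" "(x',y') \<in> mu" shows "(f x x', f y y') \<in> mu"
proof -
  have "(f x x', f y x') \<in> mu" using mu_r assms muS by blast
  moreover have "(f y x', f y y') \<in> mu" using mu_l assms muS by blast
  ultimately show ?thesis by (rule mu_trans)
qed

lemma rep_rel: "x \<in> S \<Longrightarrow> (x, rep x) \<in> mu"
  unfolding rep_def by (rule someI_ex) (use mu_refl in blast)
lemma rep_eq: assumes "(x,y) \<in> mu" shows "rep x = rep y"
proof -
  have "(\<lambda>w. (x,w) \<in> mu) = (\<lambda>w. (y,w) \<in> mu)"
    using assms mu_sym mu_trans by blast
  thus ?thesis unfolding rep_def by simp
qed
lemma rep_eqD: "x \<in> S \<Longrightarrow> y \<in> S \<Longrightarrow> rep x = rep y \<Longrightarrow> (x,y) \<in> mu"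
  by (metis rep_rel mu_sym mu_trans)
lemma rep_S: "x \<in> S \<Longrightarrow> rep x \<in> S" using rep_rel muS by blast
lemma rep_rep: "x \<in> S \<Longrightarrow> rep (rep x) = rep x" using rep_eq[OF mu_sym[OF rep_rel]] by blast
lemma rep_f: "x \<in> S \<Longrightarrow> y \<in> S \<Longrightarrow> rep (f (rep x) (rep y)) = rep (f x y)"
  using rep_eq[OF mu_sym[OF mu_2[OF rep_rel rep_rel]]] by blast
lemma g_rep: "x \<in> S \<Longrightarrow> y \<in> S \<Longrightarrow> g (rep x) (rep y) = rep (f x y)"
  unfolding g_def by (rule rep_f)

lemma pq_sep: "rep (f x0 u) \<noteq> rep (f x0 v)"
proof
  assume "rep (f x0 u) = rep (f x0 v)"
  moreover have "f x0 u \<in> S" "f x0 v \<in> S" using x0 by auto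
  ultimately have "(f x0 u, f x0 v) \<in> mu" using rep_eqD by blast
  thus False using sep by blast
qed

lemma spow_mu: "x \<in> S0 \<Longrightarrow> w \<in> {u,v} \<Longrightarrow> (x, w) \<in> mu \<Longrightarrow> (spow f x n, w) \<in> mu"
proof (induction n)
  case 0 then show ?case by simp
next
  case (Suc n)
  have "(spow f x n, w) \<in> mu" using Suc.IH Suc.prems by blast
  hence "(f x (spow f x n), f w w) \<in> mu" using mu_2 Suc.prems(3) by blast
  thus ?case using rz[of w w] Suc.prems(2) by simp
qed

lemma no_mix: assumes x: "x \<in> S0" and w: "w \<in> {u,v}" and xw: "(x,w) \<in> mu" shows False
proof -
  obtain n where n: "spow f x n = z" using nilpow x by blast
  have zw: "(z, w) \<in> mu" using spow_mu[OF x w xw, of n] unfolding n .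
  have zz: "(z, w') \<in> mu" if w': "w' \<in> {u,v}" for w'
  proof -
    have "w' \<in> S" using w' by auto
    hence "(f z w', f w w') \<in> mu" using mu_r[OF zw] by blast
    thus ?thesis using zl[of w'] rz[OF w' w] \<open>w' \<in> S\<close> by simp
  qed
  have x0S: "x0 \<in> S" using x0 by auto
  have a: "(f x0 z, f x0 u) \<in> mu" using mu_l[OF zz x0S] by blast
  have b: "(f x0 z, f x0 v) \<in> mu" using mu_l[OF zz x0S] by blast
  have "(f x0 u, f x0 v) \<in> mu" using mu_trans[OF mu_sym[OF a] b] .
  thus False using sep by blast
qed

lemma rep_S0: assumes x: "x \<in> S0" shows "rep x \<in> S0"
proof (rule ccontr)
  assume "rep x \<notin> S0"
  hence "rep x \<in> {u,v}" using Scases rep_S x by blast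
  thus False using no_mix[OF x _ rep_rel] x by blast
qed
lemma rep_uv: assumes w: "w \<in> {u,v}" shows "rep w \<in> {u,v}"
proof (rule ccontr)
  have wS: "w \<in> S" using w by auto
  assume "rep w \<notin> {u,v}"
  hence "rep w \<in> S0" using Scases rep_S wS by blast
  thus False using no_mix[OF _ w mu_sym[OF rep_rel[OF wS]]] by blast
qed
lemma rep_u_ne_v: "rep u \<noteq> rep v"
proof
  assume "rep u = rep v"
  hence "(u,v) \<in> mu" using rep_eqD uS vS by blast
  hence "(f x0 u, f x0 v) \<in> mu" using mu_l x0 by blast
  thus False using sep by blast
qed

end


context qt begin

definition "T = rep ` S"
definition "T0 = rep ` S0"

lemma T_rep: "x \<in> T \<Longrightarrow> x \<in> S \<and> rep x = x"
  unfolding T_def using rep_S rep_rep by auto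
lemma T0_T: "T0 \<subseteq> T" unfolding T0_def T_def using S0S by auto

lemma g_assoc: assumes "x \<in> T" "y \<in> T" "w \<in> T" shows "g (g x y) w = g x (g y w)"
proof -
  obtain a b c where abc: "a \<in> S" "b \<in> S" "c \<in> S" "x = rep a" "y = rep b" "w = rep c"
    using assms unfolding T_def by auto
  have "g (g x y) w = rep (f (f a b) c)" using abc g_rep[of a b] g_rep[of "f a b" c] by simp
  moreover have "g x (g y w) = rep (f a (f b c))" using abc g_rep[of b c] g_rep[of a "f b c"] by simp
  ultimately show ?thesis using assoc abc by simp
qed

lemma g_T: "x \<in> T \<Longrightarrow> y \<in> T \<Longrightarrow> g x y \<in> T"
  unfolding T_def g_def using rep_S by auto

lemma g_T0: assumes "x \<in> T" "y \<in> T0" shows "g x y \<in> T0 \<and> g y x \<in> T0"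
proof -
  obtain a b where ab: "a \<in> S" "b \<in> S0" "x = rep a" "y = rep b"
    using assms unfolding T_def T0_def by auto
  have "g x y = rep (f a b)" "g y x = rep (f b a)" using ab g_rep by auto
  thus ?thesis using ab idl idr unfolding T0_def by auto
qed

lemma spow_g: "b \<in> S \<Longrightarrow> spow g (rep b) n = rep (spow f b n)"
proof (induction n)
  case 0 then show ?case by simp
next
  case (Suc n) then show ?case using g_rep[of b "spow f b n"] spow_S by simp
qed

lemma T_t2rs: "t2rs T g T0 (rep u) (rep v) (rep z)"
proof
  show "semigroup_on T g" unfolding semigroup_on_def using g_T g_assoc by blast
  show "T = T0 \<union> {rep u, rep v}" unfolding T_def T0_def using S_eq by auto
  show "rep u \<notin> T0"
  proof
    assume "rep u \<in> T0"
    then obtain y where y: "y \<in> S0" "rep u = rep y" unfolding T0_def by auto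
    hence "(y, u) \<in> mu" using rep_eqD[of y u] by auto
    thus False using no_mix y by blast
  qed
  show "rep v \<notin> T0"
  proof
    assume "rep v \<in> T0"
    then obtain y where y: "y \<in> S0" "rep v = rep y" unfolding T0_def by auto
    hence "(y, v) \<in> mu" using rep_eqD[of y v] by auto
    thus False using no_mix y by blast
  qed
  show "rep u \<noteq> rep v" by (rule rep_u_ne_v)
  show "ideal_of T g T0" unfolding ideal_of_def using T0_T g_T0 zS0 unfolding T0_def by blast
  show "nil_semigroup_with_zero T0 g (rep z)"
  proof -
    have A: "semigroup_on T0 g" unfolding semigroup_on_def using g_T0 g_assoc T0_T by blast
    have B: "rep z \<in> T0" unfolding T0_def by auto
    have C: "g (rep z) x = rep z \<and> g x (rep z) = rep z" if xT: "x \<in> T0" for x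
    proof -
      obtain b where b: "b \<in> S0" "x = rep b" using xT unfolding T0_def by auto
      show ?thesis using b g_rep[of z b] g_rep[of b z] z0[OF b(1)] S0S'[OF b(1)] by simp
    qed
    have E: "\<exists>n. spow g x n = rep z" if xT: "x \<in> T0" for x
    proof -
      obtain b where b: "b \<in> S0" "x = rep b" using xT unfolding T0_def by auto
      obtain n where "spow f b n = z" using nilpow b by blast
      thus ?thesis using spow_g b by auto
    qed
    show ?thesis unfolding nil_semigroup_with_zero_def using A B C E by blast
  qed
  show "g (rep u) (rep u) = rep u" "g (rep u) (rep v) = rep v" "g (rep v) (rep u) = rep u" "g (rep v) (rep v) = rep v"
    using g_rep uu uvv vu vv by auto
qed

lemma T_delta: assumes D: "delta_semigroup S f" shows "delta_semigroup T g"
  unfolding delta_semigroup_def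
proof (intro conjI allI impI)
  show "semigroup_on T g" using t2rs.axioms(1)[OF T_t2rs] sgp.sg by blast
  fix R1 R2 assume R: "congruence_on T g R1" "congruence_on T g R2"
  define lift where "lift R = {(x,y). x \<in> S \<and> y \<in> S \<and> (rep x, rep y) \<in> R}" for R
  have lc: "congruence_on S f (lift R)" if R: "congruence_on T g R" for R
  proof (rule congI)
    show "lift R \<subseteq> S \<times> S" unfolding lift_def by auto
    show "(x,x) \<in> lift R" if "x \<in> S" for x
      using that R unfolding lift_def congruence_on_def equiv_def refl_on_def T_def by auto
    show "sym (lift R)" using R unfolding lift_def congruence_on_def equiv_def sym_def by auto
    show "trans (lift R)" using R unfolding lift_def congruence_on_def equiv_def trans_def by blast
    fix a b c assume ab: "(a,b) \<in> lift R" and c: "c \<in> S"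
    have rc: "rep c \<in> T" using c unfolding T_def by auto
    have "(g (rep c) (rep a), g (rep c) (rep b)) \<in> R \<and> (g (rep a) (rep c), g (rep b) (rep c)) \<in> R"
      using congD[OF R _ rc] ab unfolding lift_def by auto
    thus "(f c a, f c b) \<in> lift R \<and> (f a c, f b c) \<in> lift R"
      using ab c g_rep unfolding lift_def by auto
  qed
  have bck: "R \<subseteq> lift R" if R: "congruence_on T g R" for R
  proof
    fix xy assume xy: "xy \<in> R"
    obtain x y where e: "xy = (x,y)" by (cases xy)
    have "x \<in> T" "y \<in> T" using congS[OF R] xy e by auto
    thus "xy \<in> lift R" using T_rep xy e unfolding lift_def by auto
  qed
  have fwd: "(x,y) \<in> lift R \<Longrightarrow> x \<in> T \<Longrightarrow> y \<in> T \<Longrightarrow> (x,y) \<in> R" for R x y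
    unfolding lift_def using T_rep by auto
  have "lift R1 \<subseteq> lift R2 \<or> lift R2 \<subseteq> lift R1"
    using D lc R unfolding delta_semigroup_def by blast
  moreover have "R1 \<subseteq> T \<times> T" "R2 \<subseteq> T \<times> T" using congS R by fastforce+
  ultimately show "R1 \<subseteq> R2 \<or> R2 \<subseteq> R1" using bck[OF R(1)] bck[OF R(2)] fwd by blast
qed

end


context qt begin

lemma final:
  assumes D: "delta_semigroup S f"
  shows "\<exists>(S' :: 'a set) f' S0' S1' z' b. T2R S' f' S0' S1' z'
           \<and> b \<in> S0' \<and> card (Jclass S' f' b) = 2 \<and> Iideal S' f' b = {z'}"
proof -
  interpret TT: t2rs T g T0 "rep u" "rep v" "rep z" by (rule T_t2rs)
  define p where "p = f x0 u"
  define q where "q = f x0 v"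
  have x0S: "x0 \<in> S" using x0 by auto
  have pS0: "p \<in> S0" "q \<in> S0" unfolding p_def q_def using x0 by auto
  hence pS: "p \<in> S" "q \<in> S" by auto
  define b where "b = rep p"
  have bT0: "b \<in> T0" unfolding b_def T0_def using pS0 by auto
  have bT: "b \<in> T" using bT0 T0_T by auto
  have pu: "f p u = p" unfolding p_def using assoc[OF x0S uS uS] uu by simp
  have pv: "f p v = q" unfolding p_def q_def using assoc[OF x0S uS vS] uvv by simp
  have qu: "f q u = p" unfolding p_def q_def using assoc[OF x0S vS uS] vu by simp
  have bu: "g b (rep u) = b" unfolding b_def using g_rep[OF pS(1) uS] pu by simp
  have bv: "g b (rep v) = rep q" unfolding b_def using g_rep[OF pS(1) vS] pv by simp
  have qb: "g (rep q) (rep u) = b" unfolding b_def using g_rep[OF pS(2) uS] qu by simp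
  have bq: "b \<noteq> rep q" unfolding b_def p_def q_def by (rule pq_sep)
  have JC: "Jclass T g b = {b, rep q}"
    using TT.Jclass_two[OF bT0 bu] bv bq by simp
  have card2: "card (Jclass T g b) = 2" using JC bq by simp
  have bz: "b \<noteq> rep z" using bv bq TT.zl by auto
  have qz: "rep q \<noteq> rep z" using qb bz TT.zl by auto
  define K where "K = {y \<in> T. b \<notin> Jideal T g y}"
  have Kcl: "g s y \<in> K \<and> g y s \<in> K" if y: "y \<in> K" and s: "s \<in> T" for y s
  proof -
    have yT: "y \<in> T" using y K_def by auto
    have "Jideal T g (g s y) \<subseteq> Jideal T g y" "Jideal T g (g y s) \<subseteq> Jideal T g y"
      using TT.J_trans[OF yT TT.J_left[OF yT s]] TT.J_trans[OF yT TT.J_right[OF yT s]] by auto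
    thus ?thesis using y s yT g_T unfolding K_def by auto
  qed
  have zK: "rep z \<in> K"
  proof -
    have "Jideal T g (rep z) = {rep z}"
      unfolding Jideal_def using TT.zl TT.zr by auto
    thus ?thesis unfolding K_def using bz TT.zS by auto
  qed
  define L where "L = {(x,y). x \<in> S \<and> y \<in> S \<and> (rep x = rep y \<or> (rep x \<in> K \<and> rep y \<in> K))}"
  have LC: "congruence_on S f L"
  proof (rule congI)
    show "L \<subseteq> S \<times> S" unfolding L_def by auto
    show "\<And>x. x \<in> S \<Longrightarrow> (x,x) \<in> L" unfolding L_def by auto
    show "sym L" unfolding L_def sym_def by auto
    show "trans L" unfolding L_def trans_def by auto
    fix a c d assume ac: "(a,c) \<in> L" and d: "d \<in> S"
    have dT: "rep d \<in> T" using d unfolding T_def by auto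
    have aS: "a \<in> S" "c \<in> S" using ac unfolding L_def by auto
    have e: "rep (f d a) = g (rep d) (rep a)" "rep (f d c) = g (rep d) (rep c)"
      "rep (f a d) = g (rep a) (rep d)" "rep (f c d) = g (rep c) (rep d)"
      using g_rep aS d by auto
    show "(f d a, f d c) \<in> L \<and> (f a d, f c d) \<in> L"
      using ac Kcl[OF _ dT] aS d e unfolding L_def by auto
  qed
  have "(p,q) \<notin> L" unfolding L_def K_def using bq TT.J_self unfolding b_def by auto
  hence LM: "L \<subseteq> mu" using max[OF LC] unfolding p_def q_def by blast
  have Kz: "y = rep z" if y: "y \<in> K" for y
  proof -
    have yT: "y \<in> T" using y K_def by auto
    then obtain y0 where y0: "y0 \<in> S" "y = rep y0" unfolding T_def by auto
    have "(y0, z) \<in> L" unfolding L_def using y0 y zK by auto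
    hence "(y0, z) \<in> mu" using LM by auto
    thus ?thesis using rep_eq y0 by auto
  qed
  have "Iideal T g b = {rep z}"
  proof
    show "Iideal T g b \<subseteq> {rep z}"
    proof
      fix y assume "y \<in> Iideal T g b"
      hence y: "y \<in> Jideal T g b" "y \<notin> Jclass T g b" unfolding Iideal_def by auto
      have yT: "y \<in> T" using TT.J_sub[OF bT] y by auto
      have "b \<notin> Jideal T g y"
      proof
        assume "b \<in> Jideal T g y"
        hence "Jideal T g b \<subseteq> Jideal T g y" using TT.J_trans[OF yT] by auto
        moreover have "Jideal T g y \<subseteq> Jideal T g b" using TT.J_trans[OF bT y(1)] .
        ultimately have "y \<in> Jclass T g b" unfolding Jclass_def using yT by auto
        thus False using y by auto
      qed
      thus "y \<in> {rep z}" using Kz yT unfolding K_def by auto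
    qed
    show "{rep z} \<subseteq> Iideal T g b"
    proof -
      obtain n where n: "spow g b n = rep z" using TT.nilpow bT0 by blast
      then obtain m where m: "n = Suc m" using bz by (cases n) auto
      have "rep z = g b (spow g b m)" using n m by simp
      moreover have "spow g b m \<in> T" using TT.spow_S bT by auto
      ultimately have "rep z \<in> Jideal T g b" using TT.J_right[OF bT] by auto
      moreover have "rep z \<notin> Jclass T g b" using JC bz qz by auto
      ultimately show ?thesis unfolding Iideal_def by auto
    qed
  qed
  moreover have "T2R T g T0 {rep u, rep v} (rep z)"
  proof -
    have "card T0 \<noteq> 1"
    proof
      assume "card T0 = 1"
      then obtain a where "T0 = {a}" using card_1_singletonE by blast
      moreover have "rep q \<in> T0" unfolding T0_def using pS0 by auto
      ultimately show False using bT0 bq by auto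
    qed
    moreover have "delta_semigroup T g" using T_delta[OF D] .
    ultimately show ?thesis unfolding T2R_def
      using TT.S_eq TT.uS0 TT.vS0 TT.ideal TT.nil TT.uv TT.uu TT.uvv TT.vu TT.vv by auto
  qed
  ultimately show ?thesis using bT0 card2 by blast
qed

end

theorem proposition5:
  fixes S :: "'a set" and f :: "'a \<Rightarrow> 'a \<Rightarrow> 'a" and S0 S1 :: "'a set" and z :: 'a
  assumes "T2R S f S0 S1 z"
  shows "\<exists>(S' :: 'a set) f' S0' S1' z' b. T2R S' f' S0' S1' z'
           \<and> b \<in> S0' \<and> card (Jclass S' f' b) = 2 \<and> Iideal S' f' b = {z'}"
proof -
  from assms obtain u v where uv: "u \<noteq> v" "S1 = {u,v}" "\<forall>x\<in>S1. \<forall>y\<in>S1. f x y = y"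
    and D: "delta_semigroup S f" and Seq: "S = S0 \<union> S1" "S0 \<inter> S1 = {}"
    and I: "ideal_of S f S0" and N: "nil_semigroup_with_zero S0 f z" and C: "card S0 \<noteq> 1"
    unfolding T2R_def by blast
  have sg: "semigroup_on S f" using D unfolding delta_semigroup_def by blast
  interpret t2rs S f S0 u v z
    by (unfold_locales) (use sg uv Seq I N in auto)
  obtain x0 where x0: "x0 \<in> S0" "f x0 u \<noteq> f x0 v" using exists_x0[OF D C] by blast
  define mu where "mu = \<Union>{R. congruence_on S f R \<and> (f x0 u, f x0 v) \<notin> R}"
  note M = max_cong[OF sg D x0(2)]
  interpret qt S f S0 u v z mu x0
    by (unfold_locales) (use M x0 in \<open>auto simp: mu_def\<close>)
  show ?thesis by (rule final[OF D])
qed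


end
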